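(* Let $\Psi$ be a declarative context and $A, B, C$ types with $\Psi \vdash A\ \mathsf{type}$, $\Psi \vdash B\ \mathsf{type}$ and $\Psi \vdash C\ \mathsf{type}$. If $\Psi \vdash A \le^{\pm} B$ and $\Psi \vdash B \le^{\pm} C$ (same polarity $\pm$), then $\Psi \vdash A \le^{\pm} C$.
   Context: Sorts are $\kappa \in \{\mathsf{type}, \mathbb{N}\}$. Index terms/monotypes $\tau, t$ are built from $\mathbf{1}$, universal variables $\alpha$, binary connectives $\tau_1 \oplus \tau_2$ with $\oplus \in \{\to, +, \times\}$ (sort $\mathsf{type}$), and $\mathsf{zero}$, $\mathsf{succ}(t)$ (sort $\mathbb{N}$); $\Psi \vdash t : \kappa$ means $t$ has sort $\kappa$ with its variables declared in $\Psi$. Types are $A, B, C ::= \mathbf{1} \mid \alpha \mid A \oplus B \mid \forall \alpha{:}\kappa.\,A \mid \exists \alpha{:}\kappa.\,A \mid P \supset A \mid A \wedge P \mid \mathsf{Vec}\ t\ A$ with propositions $P ::= t = t'$. A declarative context $\Psi$ is a list of declarations including universal variables $\alpha:\kappa$; $\Psi \vdash A\ \mathsf{type}$ means all free variables of $A$ are declared in $\Psi$ at appropriate sorts. A type is positive if headed by $\exists$, negative if headed by $\forall$; nonpos = not positive, nonneg = not negative. Declarative subtyping $\Psi \vdash A \le^{\pm} B$ is inductively defined by: (Refl) if $\Psi \vdash A\ \mathsf{type}$ and $A$ is nonpos and nonneg then $\Psi \vdash A \le^{\pm} A$; ($\forall$L) $\Psi \vdash \tau : \kappa$ and $\Psi \vdash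 [\tau/\alpha]A \le^- B$ give $\Psi \vdash \forall\alpha{:}\kappa.A \le^- B$; ($\forall$R) $\Psi, \beta{:}\kappa \vdash A \le^- B$ gives $\Psi \vdash A \le^- \forall\beta{:}\kappa.B$; ($\exists$L) $\Psi, \alpha{:}\kappa \vdash A \le^+ B$ gives $\Psi \vdash \exists\alpha{:}\kappa.A \le^+ B$; ($\exists$R) $\Psi \vdash \tau:\kappa$ and $\Psi \vdash A \le^+ [\tau/\beta]B$ give $\Psi \vdash A \le^+ \exists\beta{:}\kappa.B$; ($-{+}$) $\Psi \vdash A \le^- B$ with $A,B$ nonpos gives $\Psi \vdash A \le^+ B$; ($+{-}$) $\Psi \vdash A \le^+ B$ with $A,B$ nonneg gives $\Psi \vdash A \le^- B$. *)

theory Defs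
  imports Main
begin

text \<open>Locally de Bruijn representation of the declarative system.
  Type variables are de Bruijn indices counting universal declarations
  from the right end (most recent declaration = index 0) of the context.\<close>

datatype sort = SType | SNat

datatype binop = Arrow | Sum | Prod

text \<open>Types, monotypes and index terms share one syntax (as in the paper,
  monotypes/index terms are a sublanguage; which expressions are index terms
  of which sort is determined by the sorting judgment).\<close>
datatype ty =
    Unit
  | TVar nat
  | Bin binop ty ty
  | All sort ty
  | Ex sort ty
  | Impl prp ty
  | With ty prp
  | Vec ty ty
  | Zero
  | Succ ty
and prp = PEq ty ty

datatype decl = DUniv sort | DVar string ty

type_synonym ctx = "decl list"

fun ulookup :: "ctx \<Rightarrow> nat \<Rightarrow> sort option" where
  "ulookup [] n = None"
| "ulookup (DUniv k # \<Psi>) 0 = Some k"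
| "ulookup (DUniv k # \<Psi>) (Suc n) = ulookup \<Psi> n"
| "ulookup (DVar x A # \<Psi>) n = ulookup \<Psi> n"

fun lift :: "nat \<Rightarrow> ty \<Rightarrow> ty" and lift_prop :: "nat \<Rightarrow> prp \<Rightarrow> prp" where
  "lift c Unit = Unit"
| "lift c (TVar n) = TVar (if n < c then n else Suc n)"
| "lift c (Bin op A B) = Bin op (lift c A) (lift c B)"
| "lift c (All k A) = All k (lift (Suc c) A)"
| "lift c (Ex k A) = Ex k (lift (Suc c) A)"
| "lift c (Impl P A) = Impl (lift_prop c P) (lift c A)"
| "lift c (With A P) = With (lift c A) (lift_prop c P)"
| "lift c (Vec t A) = Vec (lift c t) (lift c A)"
| "lift c Zero = Zero"
| "lift c (Succ t) = Succ (lift c t)"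
| "lift_prop c (PEq t t') = PEq (lift c t) (lift c t')"

text \<open>Capture-avoiding substitution [s/k]A: replaces variable k by s and
  lowers the variables above k (the binder of k is removed).\<close>
fun subst :: "nat \<Rightarrow> ty \<Rightarrow> ty \<Rightarrow> ty" and subst_prop :: "nat \<Rightarrow> ty \<Rightarrow> prp \<Rightarrow> prp" where
  "subst k s Unit = Unit"
| "subst k s (TVar n) = (if n < k then TVar n else if n = k then s else TVar (n - 1))"
| "subst k s (Bin op A B) = Bin op (subst k s A) (subst k s B)"
| "subst k s (All j A) = All j (subst (Suc k) (lift 0 s) A)"
| "subst k s (Ex j A) = Ex j (subst (Suc k) (lift 0 s) A)"
| "subst k s (Impl P A) = Impl (subst_prop k s P) (subst k s A)"
| "subst k s (With A P) = With (subst k s A) (subst_prop k s P)"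
| "subst k s (Vec t A) = Vec (subst k s t) (subst k s A)"
| "subst k s Zero = Zero"
| "subst k s (Succ t) = Succ (subst k s t)"
| "subst_prop k s (PEq t t') = PEq (subst k s t) (subst k s t')"

inductive has_sort :: "ctx \<Rightarrow> ty \<Rightarrow> sort \<Rightarrow> bool" where
  SUnit: "has_sort \<Psi> Unit SType"
| SVar: "ulookup \<Psi> n = Some k \<Longrightarrow> has_sort \<Psi> (TVar n) k"
| SBin: "has_sort \<Psi> t1 SType \<Longrightarrow> has_sort \<Psi> t2 SType \<Longrightarrow> has_sort \<Psi> (Bin op t1 t2) SType"
| SZero: "has_sort \<Psi> Zero SNat"
| SSucc: "has_sort \<Psi> t SNat \<Longrightarrow> has_sort \<Psi> (Succ t) SNat"

inductive wf_prop :: "ctx \<Rightarrow> prp \<Rightarrow> bool" where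
  "has_sort \<Psi> t k \<Longrightarrow> has_sort \<Psi> t' k \<Longrightarrow> wf_prop \<Psi> (PEq t t')"

inductive wf_type :: "ctx \<Rightarrow> ty \<Rightarrow> bool" where
  WUnit: "wf_type \<Psi> Unit"
| WVar: "ulookup \<Psi> n = Some SType \<Longrightarrow> wf_type \<Psi> (TVar n)"
| WBin: "wf_type \<Psi> A \<Longrightarrow> wf_type \<Psi> B \<Longrightarrow> wf_type \<Psi> (Bin op A B)"
| WAll: "wf_type (DUniv k # \<Psi>) A \<Longrightarrow> wf_type \<Psi> (All k A)"
| WEx: "wf_type (DUniv k # \<Psi>) A \<Longrightarrow> wf_type \<Psi> (Ex k A)"
| WImpl: "wf_prop \<Psi> P \<Longrightarrow> wf_type \<Psi> A \<Longrightarrow> wf_type \<Psi> (Impl P A)"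
| WWith: "wf_type \<Psi> A \<Longrightarrow> wf_prop \<Psi> P \<Longrightarrow> wf_type \<Psi> (With A P)"
| WVec: "has_sort \<Psi> t SNat \<Longrightarrow> wf_type \<Psi> A \<Longrightarrow> wf_type \<Psi> (Vec t A)"

fun positive :: "ty \<Rightarrow> bool" where
  "positive (Ex k A) = True"
| "positive _ = False"

fun negative :: "ty \<Rightarrow> bool" where
  "negative (All k A) = True"
| "negative _ = False"

datatype polarity = Pos | Neg

inductive subtype :: "ctx \<Rightarrow> polarity \<Rightarrow> ty \<Rightarrow> ty \<Rightarrow> bool" where
  Refl: "wf_type \<Psi> A \<Longrightarrow> \<not> positive A \<Longrightarrow> \<not> negative A \<Longrightarrow> subtype \<Psi> p A A"
| AllL: "has_sort \<Psi> \<tau> k \<Longrightarrow> subtype \<Psi> Neg (subst 0 \<tau> A) B \<Longrightarrow> subtype \<Psi> Neg (All k A) B"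
| AllR: "subtype (DUniv k # \<Psi>) Neg (lift 0 A) B \<Longrightarrow> subtype \<Psi> Neg A (All k B)"
| ExL: "subtype (DUniv k # \<Psi>) Pos A (lift 0 B) \<Longrightarrow> subtype \<Psi> Pos (Ex k A) B"
| ExR: "has_sort \<Psi> \<tau> k \<Longrightarrow> subtype \<Psi> Pos A (subst 0 \<tau> B) \<Longrightarrow> subtype \<Psi> Pos A (Ex k B)"
| NegPos: "subtype \<Psi> Neg A B \<Longrightarrow> \<not> positive A \<Longrightarrow> \<not> positive B \<Longrightarrow> subtype \<Psi> Pos A B"
| PosNeg: "subtype \<Psi> Pos A B \<Longrightarrow> \<not> negative A \<Longrightarrow> \<not> negative B \<Longrightarrow> subtype \<Psi> Neg A B"

end

theory Submission
  imports Defs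
begin

fun qc :: "ty \<Rightarrow> nat" where
  "qc (All k A) = Suc (qc A)"
| "qc (Ex k A) = Suc (qc A)"
| "qc (Bin op A B) = qc A + qc B"
| "qc (Impl P A) = qc A"
| "qc (With A P) = qc A"
| "qc (Vec t A) = qc t + qc A"
| "qc (Succ t) = qc t"
| "qc _ = 0"

lemma qc_lift[simp]: "qc (lift c A) = qc A"
  by (induction A arbitrary: c) auto

lemma qc_subst[simp]: "qc s = 0 \<Longrightarrow> qc (subst j s A) = qc A"
  by (induction A arbitrary: j s) auto

lemma L1[simp]: "subst c s (lift c A) = A" and "subst_prop c s (lift_prop c P) = P"
  by (induction A and P arbitrary: c s and c s) auto

lemma L2: "c \<le> d \<Longrightarrow> lift (Suc d) (lift c A) = lift c (lift d A)"
  and "c \<le> d \<Longrightarrow> lift_prop (Suc d) (lift_prop c P) = lift_prop c (lift_prop d P)"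
  by (induction A and P arbitrary: c d and c d) auto

lemma L2'[simp]: "lift (Suc d) (lift 0 A) = lift 0 (lift d A)"
  using L2(1)[of 0 d A] by simp

lemma L3: "j \<le> c \<Longrightarrow> lift c (subst j t A) = subst j (lift c t) (lift (Suc c) A)"
  and "j \<le> c \<Longrightarrow> lift_prop c (subst_prop j t P) = subst_prop j (lift c t) (lift_prop (Suc c) P)"
  by (induction A and P arbitrary: j c t and j c t) auto

lemma L5: "c \<le> j \<Longrightarrow> lift c (subst j s A) = subst (Suc j) (lift c s) (lift c A)"
  and "c \<le> j \<Longrightarrow> lift_prop c (subst_prop j s P) = subst_prop (Suc j) (lift c s) (lift_prop c P)"
  by (induction A and P arbitrary: j c s and j c s) auto

lemma L4: "i \<le> j \<Longrightarrow> subst j s (subst i t A) = subst i (subst j s t) (subst (Suc j) (lift i s) A)"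
  and "i \<le> j \<Longrightarrow> subst_prop j s (subst_prop i t P) = subst_prop i (subst j s t) (subst_prop (Suc j) (lift i s) P)"
  by (induction A and P arbitrary: i j s t and i j s t) (auto simp: L5)

definition ins :: "nat \<Rightarrow> ctx \<Rightarrow> ctx \<Rightarrow> bool" where
  "ins c D D' \<longleftrightarrow> (\<forall>n. ulookup D' (if n < c then n else Suc n) = ulookup D n)"

lemma ins_cons: "ins c D D' \<Longrightarrow> ins (Suc c) (DUniv k # D) (DUniv k # D')"
  unfolding ins_def
proof (intro allI)
  fix n assume h: "\<forall>n. ulookup D' (if n < c then n else Suc n) = ulookup D n"
  show "ulookup (DUniv k # D') (if n < Suc c then n else Suc n) = ulookup (DUniv k # D) n"
    using h[rule_format, of "n - 1"] by (cases n) (auto split: if_splits)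
qed

lemma ins_0: "ins 0 D (DUniv k # D)"
  unfolding ins_def by simp

lemma hs_lift: "has_sort D t k \<Longrightarrow> ins c D D' \<Longrightarrow> has_sort D' (lift c t) k"
proof (induction rule: has_sort.induct)
  case (SVar \<Psi> n k)
  then have "ulookup D' (if n < c then n else Suc n) = Some k" unfolding ins_def by metis
  then show ?case by (auto intro: has_sort.SVar)
qed (auto intro: has_sort.intros)

lemma wfp_lift: "wf_prop D P \<Longrightarrow> ins c D D' \<Longrightarrow> wf_prop D' (lift_prop c P)"
  by (induction rule: wf_prop.induct) (auto intro: wf_prop.intros hs_lift)

lemma wf_lift: "wf_type D A \<Longrightarrow> ins c D D' \<Longrightarrow> wf_type D' (lift c A)"
proof (induction arbitrary: c D' rule: wf_type.induct)
  case (WVar \<Psi> n)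
  then have "ulookup D' (if n < c then n else Suc n) = Some SType" unfolding ins_def by metis
  then show ?case by (auto intro: wf_type.WVar)
qed (auto intro!: wf_type.intros wfp_lift hs_lift ins_cons)

definition sub :: "nat \<Rightarrow> sort \<Rightarrow> ctx \<Rightarrow> ctx \<Rightarrow> bool" where
  "sub j k G D \<longleftrightarrow> ulookup G j = Some k \<and> (\<forall>n<j. ulookup G n = ulookup D n)
     \<and> (\<forall>n>j. ulookup G n = ulookup D (n - 1))"

lemma sub_cons: "sub j k G D \<Longrightarrow> sub (Suc j) k (DUniv k' # G) (DUniv k' # D)"
  unfolding sub_def
proof (intro conjI allI impI; (elim conjE)?)
  fix n assume a: "ulookup G j = Some k" "\<forall>n<j. ulookup G n = ulookup D n"
     "\<forall>n>j. ulookup G n = ulookup D (n - 1)"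
  show "ulookup (DUniv k' # G) (Suc j) = Some k" using a by simp
  show "n < Suc j \<Longrightarrow> ulookup (DUniv k' # G) n = ulookup (DUniv k' # D) n"
    using a by (cases n) auto
  show "Suc j < n \<Longrightarrow> ulookup (DUniv k' # G) n = ulookup (DUniv k' # D) (n - 1)"
    using a by (cases n; cases "n - 1") auto
qed

lemma sub_0: "sub 0 k (DUniv k # D) D"
  unfolding sub_def by (auto simp: gr0_conv_Suc)

lemma hs_subst: "has_sort G t k' \<Longrightarrow> sub j k G D \<Longrightarrow> has_sort D s k \<Longrightarrow> has_sort D (subst j s t) k'"
proof (induction rule: has_sort.induct)
  case (SVar \<Psi> n k')
  then show ?case unfolding sub_def
    by (auto intro!: has_sort.SVar)
qed (auto intro: has_sort.intros)

lemma wfp_subst: "wf_prop G P \<Longrightarrow> sub j k G D \<Longrightarrow> has_sort D s k \<Longrightarrow> wf_prop D (subst_prop j s P)"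
  by (induction rule: wf_prop.induct) (auto intro: wf_prop.intros hs_subst)

lemma hs_nonq: "has_sort D t k \<Longrightarrow> qc t = 0 \<and> \<not> positive t \<and> \<not> negative t"
  by (induction rule: has_sort.induct) auto

lemma hs_wf: "has_sort D t k \<Longrightarrow> k = SType \<Longrightarrow> wf_type D t"
  by (induction rule: has_sort.induct) (auto intro: wf_type.intros)

lemma wf_subst: "wf_type G A \<Longrightarrow> sub j k G D \<Longrightarrow> has_sort D s k \<Longrightarrow> wf_type D (subst j s A)"
proof (induction arbitrary: j D s rule: wf_type.induct)
  case (WVar \<Psi> n)
  then show ?case unfolding sub_def
  proof (cases "n = j")
    case True
    with WVar show ?thesis by (auto simp: sub_def intro: hs_wf)
  next
    case False
    with WVar show ?thesis by (auto simp: sub_def intro!: wf_type.WVar)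
  qed
qed (auto intro!: wf_type.intros wfp_subst hs_subst sub_cons hs_lift ins_0)

lemma pos_lift[simp]: "positive (lift c A) = positive A" "negative (lift c A) = negative A"
  by (cases A; simp)+

lemma pos_subst: "\<not> positive s \<Longrightarrow> \<not> positive A \<Longrightarrow> \<not> positive (subst j s A)"
  "\<not> negative s \<Longrightarrow> \<not> negative A \<Longrightarrow> \<not> negative (subst j s A)"
  by (cases A; simp)+

lemma st_lift: "subtype G p A B \<Longrightarrow> ins c G G' \<Longrightarrow> subtype G' p (lift c A) (lift c B)"
proof (induction arbitrary: c G' rule: subtype.induct)
  case (Refl \<Psi> A p)
  then show ?case by (auto intro!: subtype.Refl wf_lift)
next
  case (AllL \<Psi> \<tau> k A B)
  then have "subtype G' Neg (subst 0 (lift c \<tau>) (lift (Suc c) A)) (lift c B)"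
    using AllL.IH[OF AllL.prems] L3(1)[of 0 c \<tau> A] by simp
  with AllL show ?case by (auto intro!: subtype.AllL hs_lift)
next
  case (AllR k \<Psi> A B)
  then have "subtype (DUniv k # G') Neg (lift (Suc c) (lift 0 A)) (lift (Suc c) B)"
    using AllR.IH[OF ins_cons[OF AllR.prems]] by simp
  then show ?case by (auto intro!: subtype.AllR)
next
  case (ExL k \<Psi> A B)
  then have "subtype (DUniv k # G') Pos (lift (Suc c) A) (lift (Suc c) (lift 0 B))"
    using ExL.IH[OF ins_cons[OF ExL.prems]] by simp
  then show ?case by (auto intro!: subtype.ExL)
next
  case (ExR \<Psi> \<tau> k A B)
  then have "subtype G' Pos (lift c A) (subst 0 (lift c \<tau>) (lift (Suc c) B))"
    using ExR.IH[OF ExR.prems] L3(1)[of 0 c \<tau> B] by simp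
  with ExR show ?case by (auto intro!: subtype.ExR hs_lift)
next
  case (NegPos \<Psi> A B)
  then show ?case by (auto intro!: subtype.NegPos)
next
  case (PosNeg \<Psi> A B)
  then show ?case by (auto intro!: subtype.PosNeg)
qed

lemma st_subst: "subtype G p A B \<Longrightarrow> sub j k G D \<Longrightarrow> has_sort D s k
   \<Longrightarrow> subtype D p (subst j s A) (subst j s B)"
proof (induction arbitrary: j D s rule: subtype.induct)
  case (Refl \<Psi> A p)
  then show ?case using hs_nonq[OF Refl(5)] pos_subst[of s A j]
    by (auto intro!: subtype.Refl wf_subst)
next
  case (AllL \<Psi> \<tau> k' A B)
  then have "subtype D Neg (subst 0 (subst j s \<tau>) (subst (Suc j) (lift 0 s) A)) (subst j s B)"
    using AllL.IH[OF AllL.prems] L4(1)[of 0 j s \<tau> A] by simp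
  with AllL show ?case by (auto intro!: subtype.AllL hs_subst)
next
  case (AllR k' \<Psi> A B)
  then have "subtype (DUniv k' # D) Neg (subst (Suc j) (lift 0 s) (lift 0 A)) (subst (Suc j) (lift 0 s) B)"
    using AllR.IH[OF sub_cons[OF AllR.prems(1)] hs_lift[OF AllR.prems(2) ins_0]] by simp
  then show ?case using L5(1)[of 0 j s A] by (auto intro!: subtype.AllR)
next
  case (ExL k' \<Psi> A B)
  then have "subtype (DUniv k' # D) Pos (subst (Suc j) (lift 0 s) A) (subst (Suc j) (lift 0 s) (lift 0 B))"
    using ExL.IH[OF sub_cons[OF ExL.prems(1)] hs_lift[OF ExL.prems(2) ins_0]] by simp
  then show ?case using L5(1)[of 0 j s B] by (auto intro!: subtype.ExL)
next
  case (ExR \<Psi> \<tau> k' A B)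
  then have "subtype D Pos (subst j s A) (subst 0 (subst j s \<tau>) (subst (Suc j) (lift 0 s) B))"
    using ExR.IH[OF ExR.prems] L4(1)[of 0 j s \<tau> B] by simp
  with ExR show ?case by (auto intro!: subtype.ExR hs_subst)
next
  case (NegPos \<Psi> A B)
  then show ?case using hs_nonq[OF NegPos.prems(2)] pos_subst[of s A j] pos_subst[of s B j] by (auto intro!: subtype.NegPos pos_subst)
next
  case (PosNeg \<Psi> A B)
  then show ?case using hs_nonq[OF PosNeg.prems(2)] pos_subst[of s A j] pos_subst[of s B j] by (auto intro!: subtype.PosNeg pos_subst)
qed

inductive_cases wfAllE: "wf_type \<Psi> (All k A)"
inductive_cases wfExE: "wf_type \<Psi> (Ex k A)"

definition OH :: "ty \<Rightarrow> ty \<Rightarrow> ty \<Rightarrow> bool" where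
  "OH A B C \<longleftrightarrow> (\<forall>\<Psi> p A' B' C'. (qc B' < qc B \<or> (qc B' = qc B \<and> qc A' + qc C' < qc A + qc C))
     \<longrightarrow> wf_type \<Psi> A' \<longrightarrow> wf_type \<Psi> B' \<longrightarrow> wf_type \<Psi> C'
     \<longrightarrow> subtype \<Psi> p A' B' \<longrightarrow> subtype \<Psi> p B' C' \<longrightarrow> subtype \<Psi> p A' C')"

lemma OHD: "OH A B C \<Longrightarrow> qc B' < qc B \<or> (qc B' = qc B \<and> qc A' + qc C' < qc A + qc C)
  \<Longrightarrow> wf_type \<Psi> A' \<Longrightarrow> wf_type \<Psi> B' \<Longrightarrow> wf_type \<Psi> C'
  \<Longrightarrow> subtype \<Psi> p A' B' \<Longrightarrow> subtype \<Psi> p B' C' \<Longrightarrow> subtype \<Psi> p A' C'"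
  unfolding OH_def by blast

lemma D2AllR:
  assumes oh: "OH A B (All k C)" and w: "wf_type \<Psi> A" "wf_type \<Psi> B" "wf_type \<Psi> (All k C)"
    and d1: "subtype \<Psi> Neg A B" and d2: "subtype (DUniv k # \<Psi>) Neg (lift 0 B) C"
  shows "subtype \<Psi> Neg A (All k C)"
proof -
  have "subtype (DUniv k # \<Psi>) Neg (lift 0 A) (lift 0 B)" using st_lift[OF d1 ins_0] .
  moreover have "wf_type (DUniv k # \<Psi>) C" using w(3) by (rule wfAllE)
  ultimately have "subtype (DUniv k # \<Psi>) Neg (lift 0 A) C"
    using OHD[OF oh, of "lift 0 B" "lift 0 A" C] d2 w wf_lift[OF _ ins_0] by auto
  then show ?thesis by (rule subtype.AllR)
qed

lemma D2ExR:
  assumes oh: "OH A B (Ex k C)" and w: "wf_type \<Psi> A" "wf_type \<Psi> B" "wf_type \<Psi> (Ex k C)"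
    and d1: "subtype \<Psi> Pos A B" and hs: "has_sort \<Psi> \<tau> k" and d2: "subtype \<Psi> Pos B (subst 0 \<tau> C)"
  shows "subtype \<Psi> Pos A (Ex k C)"
proof -
  have "wf_type (DUniv k # \<Psi>) C" using w(3) by (rule wfExE)
  then have "wf_type \<Psi> (subst 0 \<tau> C)" using wf_subst sub_0 hs by blast
  then have "subtype \<Psi> Pos A (subst 0 \<tau> C)"
    using OHD[OF oh, of B A "subst 0 \<tau> C"] d1 d2 w hs_nonq[OF hs] by auto
  then show ?thesis by (rule subtype.ExR[OF hs])
qed

lemma inner: "subtype \<Psi> p A B \<Longrightarrow> OH A B C \<Longrightarrow> wf_type \<Psi> A \<Longrightarrow> wf_type \<Psi> B \<Longrightarrow> wf_type \<Psi> C
  \<Longrightarrow> subtype \<Psi> p B C \<Longrightarrow> subtype \<Psi> p A C"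
proof (induction arbitrary: C rule: subtype.induct)
  case (Refl \<Psi> A p)
  then show ?case by simp
next
  case (AllL \<Psi> \<tau> k A B)
  have "wf_type (DUniv k # \<Psi>) A" using AllL.prems(2) by (rule wfAllE)
  then have w: "wf_type \<Psi> (subst 0 \<tau> A)" using wf_subst sub_0 AllL.hyps(1) by blast
  have "subtype \<Psi> Neg (subst 0 \<tau> A) C"
    using OHD[OF AllL.prems(1), of B "subst 0 \<tau> A" C] w AllL hs_nonq[OF AllL.hyps(1)] by auto
  then show ?case by (rule subtype.AllL[OF AllL.hyps(1)])
next
  case (AllR k \<Psi> A B)
  from AllR.prems(5) show ?case
  proof cases
    case (Refl) then show ?thesis by simp
  next
    case (AllL \<tau>)
    have "subtype \<Psi> Neg (subst 0 \<tau> (lift 0 A)) (subst 0 \<tau> B)"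
      using st_subst[OF AllR.hyps(1) sub_0 AllL(1)] .
    then have d: "subtype \<Psi> Neg A (subst 0 \<tau> B)" by simp
    have "wf_type (DUniv k # \<Psi>) B" using AllR.prems(3) by (rule wfAllE)
    then have w: "wf_type \<Psi> (subst 0 \<tau> B)" using wf_subst sub_0 AllL(1) by blast
    show ?thesis using OHD[OF AllR.prems(1), of "subst 0 \<tau> B" A C] w d AllL(2) AllR.prems
      hs_nonq[OF AllL(1)] by auto
  next
    case (AllR k' C')
    then show ?thesis using D2AllR[of A "All k B" k' C' \<Psi>] AllR.prems subtype.AllR[OF AllR.hyps(1)]
      by auto
  qed auto
next
  case (ExL k \<Psi> A B)
  have wA: "wf_type (DUniv k # \<Psi>) A" using ExL.prems(2) by (rule wfExE)
  have "subtype (DUniv k # \<Psi>) Pos (lift 0 B) (lift 0 C)" using st_lift[OF ExL.prems(5) ins_0] .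
  then have "subtype (DUniv k # \<Psi>) Pos A (lift 0 C)"
    using OHD[OF ExL.prems(1), of "lift 0 B" A "lift 0 C"] wA ExL.hyps(1) ExL.prems
      wf_lift[OF _ ins_0] by auto
  then show ?case by (rule subtype.ExL)
next
  case (ExR \<Psi> \<tau> k A B)
  from ExR.prems(5) show ?case
  proof cases
    case (Refl) then show ?thesis by simp
  next
    case ExL
    have "subtype \<Psi> Pos (subst 0 \<tau> B) (subst 0 \<tau> (lift 0 C))"
      using st_subst[OF ExL sub_0 ExR.hyps(1)] .
    then have d: "subtype \<Psi> Pos (subst 0 \<tau> B) C" by simp
    have "wf_type (DUniv k # \<Psi>) B" using ExR.prems(3) by (rule wfExE)
    then have w: "wf_type \<Psi> (subst 0 \<tau> B)" using wf_subst sub_0 ExR.hyps(1) by blast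
    show ?thesis using OHD[OF ExR.prems(1), of "subst 0 \<tau> B" A C] w d ExR
      hs_nonq[OF ExR.hyps(1)] by auto
  next
    case (ExR \<tau>' k' C')
    then show ?thesis using D2ExR[of A "Ex k B" k' C' \<Psi> \<tau>'] ExR.prems subtype.ExR[OF ExR.hyps(1,2)]
      by auto
  qed auto
next
  case (NegPos \<Psi> A B)
  from NegPos.prems(5) show ?case
  proof cases
    case (Refl) then show ?thesis using NegPos by (auto intro: subtype.NegPos)
  next
    case (ExR \<tau>' k' C')
    then show ?thesis using D2ExR[of A B k' C' \<Psi> \<tau>'] NegPos subtype.NegPos[OF NegPos.hyps]
      by auto
  next
    case NegPos
    then show ?thesis using NegPos.IH NegPos.prems NegPos.hyps by (auto intro: subtype.NegPos)
  qed (use NegPos.hyps in auto)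
next
  case (PosNeg \<Psi> A B)
  from PosNeg.prems(5) show ?case
  proof cases
    case (Refl) then show ?thesis using PosNeg by (auto intro: subtype.PosNeg)
  next
    case (AllR k' C')
    then show ?thesis using D2AllR[of A B k' C' \<Psi>] PosNeg subtype.PosNeg[OF PosNeg.hyps]
      by auto
  next
    case PosNeg
    then show ?thesis using PosNeg.IH PosNeg.prems PosNeg.hyps by (auto intro: subtype.PosNeg)
  qed (use PosNeg.hyps in auto)
qed

lemma full: "\<forall>\<Psi> p A B C. qc B = n \<longrightarrow> qc A + qc C = m \<longrightarrow> wf_type \<Psi> A \<longrightarrow> wf_type \<Psi> B
  \<longrightarrow> wf_type \<Psi> C \<longrightarrow> subtype \<Psi> p A B \<longrightarrow> subtype \<Psi> p B C \<longrightarrow> subtype \<Psi> p A C"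
proof (induction n arbitrary: m rule: less_induct)
  case (less n)
  note outer = less.IH
  show ?case
  proof (induction m rule: less_induct)
    case (less m)
    show ?case
    proof (intro allI impI)
      fix \<Psi> p A B C assume h: "qc B = n" "qc A + qc C = m" "wf_type \<Psi> A" "wf_type \<Psi> B"
        "wf_type \<Psi> C" "subtype \<Psi> p A B" "subtype \<Psi> p B C"
      have "OH A B C" unfolding OH_def
      proof (intro allI impI)
        fix \<Psi>' p' A' B' C' assume o: "qc B' < qc B \<or> qc B' = qc B \<and> qc A' + qc C' < qc A + qc C"
          and r: "wf_type \<Psi>' A'" "wf_type \<Psi>' B'" "wf_type \<Psi>' C'"
          "subtype \<Psi>' p' A' B'" "subtype \<Psi>' p' B' C'"
        show "subtype \<Psi>' p' A' C'"
        proof (cases "qc B' < qc B")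
          case True
          then show ?thesis using outer[of "qc B'"] h r
            by blast
        next
          case False
          then show ?thesis using less.IH[of "qc A' + qc C'"] o h r by auto
        qed
      qed
      then show "subtype \<Psi> p A C" using inner h by blast
    qed
  qed
qed

theorem mainTheorem4:
  assumes "wf_type \<Psi> A" and "wf_type \<Psi> B" and "wf_type \<Psi> C"
    and "subtype \<Psi> p A B" and "subtype \<Psi> p B C"
  shows "subtype \<Psi> p A C"
  using full assms by blast

end
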